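(* Let $O$ be a Cayley algebra over a field $F$ of characteristic $\neq2$ and $H$ a 4-dimensional subalgebra of $O$. Then $\operatorname{im}(H)$ contains a 2-dimensional subspace $T$ of type Q, M, D or J, and $H=\langle T\rangle$.
   Context: Cayley algebra: $D_\gamma(D_\beta(D_\alpha(F)))$, $\alpha,\beta,\gamma\in F^\times$, with $D_\gamma(A)=A\oplus A$ (elements $a+ib$), $(a+ib)(c+id)=(ac+\gamma db^* )+i(a^*d+cb)$, $(a+ib)^*=a^*-ib$, starting from $F$ with identity involution; $\operatorname{im}(H)=\{a\in H:a^*=-a\}$; subalgebras contain $1$. Nilpotent line: 1-dimensional subspace of nilpotent elements. Types of 2-dimensional $U\subseteq\operatorname{im}(O)$: Q if no nilpotent line; U if exactly one nilpotent line $Fu$ and $uv\in Fu$ for all $v\in U$; D if exactly one nilpotent line but not type U; M if exactly two nilpotent lines; Z if all elements nilpotent and all products zero; J if all elements nilpotent but not type Z. *)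

theory Defs
  imports "HOL-Analysis.Analysis" "HOL-Library.Product_Plus"
begin

text \<open>Doubling D_g(A) = A x A, elements (a,b) standing for a + ib, with
  (a+ib)(c+id) = (ac + g d b^*) + i(a^* d + c b) and (a+ib)^* = a^* - ib.\<close>

definition cd_mult :: "('b \<Rightarrow> 'b \<Rightarrow> 'b) \<Rightarrow> ('b \<Rightarrow> 'b) \<Rightarrow> ('f \<Rightarrow> 'b \<Rightarrow> 'b) \<Rightarrow> 'f
    \<Rightarrow> ('b::ab_group_add) \<times> 'b \<Rightarrow> 'b \<times> 'b \<Rightarrow> 'b \<times> 'b" where
  "cd_mult m cj s g x y =
     (m (fst x) (fst y) + s g (m (snd y) (cj (snd x))),
      m (cj (fst x)) (snd y) + m (fst y) (snd x))"

definition cd_conj :: "('b \<Rightarrow> 'b) \<Rightarrow> ('b::ab_group_add) \<times> 'b \<Rightarrow> 'b \<times> 'b" where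
  "cd_conj cj x = (cj (fst x), - snd x)"

definition cd_scale :: "('f \<Rightarrow> 'b \<Rightarrow> 'b) \<Rightarrow> 'f \<Rightarrow> 'b \<times> 'b \<Rightarrow> 'b \<times> 'b" where
  "cd_scale s k x = (s k (fst x), s k (snd x))"

definition mult1 :: "'a::field \<Rightarrow> 'a \<times> 'a \<Rightarrow> 'a \<times> 'a \<Rightarrow> 'a \<times> 'a" where
  "mult1 \<alpha> = cd_mult (*) id (*) \<alpha>"
definition conj1 :: "'a::field \<times> 'a \<Rightarrow> 'a \<times> 'a" where
  "conj1 = cd_conj id"
definition scale1 :: "'a::field \<Rightarrow> 'a \<times> 'a \<Rightarrow> 'a \<times> 'a" where
  "scale1 = cd_scale (*)"

definition mult2 :: "'a::field \<Rightarrow> 'a \<Rightarrow> ('a \<times> 'a) \<times> ('a \<times> 'a)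
    \<Rightarrow> ('a \<times> 'a) \<times> ('a \<times> 'a) \<Rightarrow> ('a \<times> 'a) \<times> ('a \<times> 'a)" where
  "mult2 \<alpha> \<beta> = cd_mult (mult1 \<alpha>) conj1 scale1 \<beta>"
definition conj2 :: "('a::field \<times> 'a) \<times> ('a \<times> 'a) \<Rightarrow> ('a \<times> 'a) \<times> ('a \<times> 'a)" where
  "conj2 = cd_conj conj1"
definition scale2 :: "'a::field \<Rightarrow> ('a \<times> 'a) \<times> ('a \<times> 'a) \<Rightarrow> ('a \<times> 'a) \<times> ('a \<times> 'a)" where
  "scale2 = cd_scale scale1"

type_synonym 'a quat = "('a \<times> 'a) \<times> ('a \<times> 'a)"
type_synonym 'a octp = "'a quat \<times> 'a quat"

definition mult3 :: "'a::field \<Rightarrow> 'a \<Rightarrow> 'a \<Rightarrow> 'a octp \<Rightarrow> 'a octp \<Rightarrow> 'a octp" where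
  "mult3 \<alpha> \<beta> \<gamma> = cd_mult (mult2 \<alpha> \<beta>) conj2 scale2 \<gamma>"
definition conj3 :: "'a::field octp \<Rightarrow> 'a octp" where
  "conj3 = cd_conj conj2"

text \<open>We use F^8 (type 'a^8) with the library vector space structure (*s)
  (interpretation vec), transporting the Cayley--Dickson structure.\<close>

definition to_octp :: "'a ^ 8 \<Rightarrow> 'a octp" where
  "to_octp x = (((x$1, x$2), (x$3, x$4)), ((x$5, x$6), (x$7, x$8)))"

definition of_octp :: "'a octp \<Rightarrow> 'a ^ 8" where
  "of_octp p = (\<chi> i. if i = 1 then fst (fst (fst p)) else if i = 2 then snd (fst (fst p))
      else if i = 3 then fst (snd (fst p)) else if i = 4 then snd (snd (fst p))
      else if i = 5 then fst (fst (snd p)) else if i = 6 then snd (fst (snd p))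
      else if i = 7 then fst (snd (snd p)) else snd (snd (snd p)))"

definition omult :: "'a::field \<Rightarrow> 'a \<Rightarrow> 'a \<Rightarrow> 'a ^ 8 \<Rightarrow> 'a ^ 8 \<Rightarrow> 'a ^ 8" where
  "omult \<alpha> \<beta> \<gamma> x y = of_octp (mult3 \<alpha> \<beta> \<gamma> (to_octp x) (to_octp y))"

definition oconj :: "'a::field ^ 8 \<Rightarrow> 'a ^ 8" where
  "oconj x = of_octp (conj3 (to_octp x))"

text \<open>The identity element 1 of the Cayley algebra (NOT the constant vector 1 of 'a^8).\<close>
definition oone :: "'a::field ^ 8" where
  "oone = of_octp (((1, 0), (0, 0)), ((0, 0), (0, 0)))"

definition oim :: "('a::field ^ 8) set \<Rightarrow> ('a ^ 8) set" where
  "oim H = {a \<in> H. oconj a = - a}"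

definition is_subalgebra :: "'a::field \<Rightarrow> 'a \<Rightarrow> 'a \<Rightarrow> ('a ^ 8) set \<Rightarrow> bool" where
  "is_subalgebra \<alpha> \<beta> \<gamma> H \<longleftrightarrow> vec.subspace H \<and> oone \<in> H \<and>
     (\<forall>x\<in>H. \<forall>y\<in>H. omult \<alpha> \<beta> \<gamma> x y \<in> H)"

definition gen_subalgebra :: "'a::field \<Rightarrow> 'a \<Rightarrow> 'a \<Rightarrow> ('a ^ 8) set \<Rightarrow> ('a ^ 8) set" where
  "gen_subalgebra \<alpha> \<beta> \<gamma> T = \<Inter> {H. is_subalgebra \<alpha> \<beta> \<gamma> H \<and> T \<subseteq> H}"

text \<open>Powers (right-multiplied; the Cayley algebra is power-associative) and nilpotency.\<close>
primrec opow :: "'a::field \<Rightarrow> 'a \<Rightarrow> 'a \<Rightarrow> 'a ^ 8 \<Rightarrow> nat \<Rightarrow> 'a ^ 8" where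
  "opow \<alpha> \<beta> \<gamma> x 0 = oone"
| "opow \<alpha> \<beta> \<gamma> x (Suc n) = omult \<alpha> \<beta> \<gamma> (opow \<alpha> \<beta> \<gamma> x n) x"

definition onilpotent :: "'a::field \<Rightarrow> 'a \<Rightarrow> 'a \<Rightarrow> 'a ^ 8 \<Rightarrow> bool" where
  "onilpotent \<alpha> \<beta> \<gamma> x \<longleftrightarrow> (\<exists>n. opow \<alpha> \<beta> \<gamma> x n = 0)"

definition nil_lines :: "'a::field \<Rightarrow> 'a \<Rightarrow> 'a \<Rightarrow> ('a ^ 8) set \<Rightarrow> ('a ^ 8) set set" where
  "nil_lines \<alpha> \<beta> \<gamma> U = {L. vec.subspace L \<and> vec.dim L = 1 \<and> L \<subseteq> U \<and>
      (\<forall>x\<in>L. onilpotent \<alpha> \<beta> \<gamma> x)}"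

definition typeQ :: "'a::field \<Rightarrow> 'a \<Rightarrow> 'a \<Rightarrow> ('a ^ 8) set \<Rightarrow> bool" where
  "typeQ \<alpha> \<beta> \<gamma> U \<longleftrightarrow> nil_lines \<alpha> \<beta> \<gamma> U = {}"

definition typeU :: "'a::field \<Rightarrow> 'a \<Rightarrow> 'a \<Rightarrow> ('a ^ 8) set \<Rightarrow> bool" where
  "typeU \<alpha> \<beta> \<gamma> U \<longleftrightarrow> (\<exists>u. nil_lines \<alpha> \<beta> \<gamma> U = {vec.span {u}} \<and>
      (\<forall>v\<in>U. omult \<alpha> \<beta> \<gamma> u v \<in> vec.span {u}))"

definition typeD :: "'a::field \<Rightarrow> 'a \<Rightarrow> 'a \<Rightarrow> ('a ^ 8) set \<Rightarrow> bool" where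
  "typeD \<alpha> \<beta> \<gamma> U \<longleftrightarrow> (\<exists>L. nil_lines \<alpha> \<beta> \<gamma> U = {L}) \<and> \<not> typeU \<alpha> \<beta> \<gamma> U"

definition typeM :: "'a::field \<Rightarrow> 'a \<Rightarrow> 'a \<Rightarrow> ('a ^ 8) set \<Rightarrow> bool" where
  "typeM \<alpha> \<beta> \<gamma> U \<longleftrightarrow> (\<exists>L1 L2. L1 \<noteq> L2 \<and> nil_lines \<alpha> \<beta> \<gamma> U = {L1, L2})"

definition typeZ :: "'a::field \<Rightarrow> 'a \<Rightarrow> 'a \<Rightarrow> ('a ^ 8) set \<Rightarrow> bool" where
  "typeZ \<alpha> \<beta> \<gamma> U \<longleftrightarrow> (\<forall>x\<in>U. onilpotent \<alpha> \<beta> \<gamma> x) \<and>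
      (\<forall>x\<in>U. \<forall>y\<in>U. omult \<alpha> \<beta> \<gamma> x y = 0)"

definition typeJ :: "'a::field \<Rightarrow> 'a \<Rightarrow> 'a \<Rightarrow> ('a ^ 8) set \<Rightarrow> bool" where
  "typeJ \<alpha> \<beta> \<gamma> U \<longleftrightarrow> (\<forall>x\<in>U. onilpotent \<alpha> \<beta> \<gamma> x) \<and> \<not> typeZ \<alpha> \<beta> \<gamma> U"

end

theory Submission
  imports Defs
begin

lemma ex8: "(i::8) = 1 \<or> i = 2 \<or> i = 3 \<or> i = 4 \<or> i = 5 \<or> i = 6 \<or> i = 7 \<or> i = 8"
proof (induct i)
  case (of_int z)
  then have "z < 8" by simp
  with of_int have "z = 0 \<or> z = 1 \<or> z = 2 \<or> z = 3 \<or> z = 4 \<or> z = 5 \<or> z = 6 \<or> z = 7" by arith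
  then show ?case by auto
qed

lemma vec8_eq: "(x::'a^8) = y \<longleftrightarrow> x$1 = y$1 \<and> x$2 = y$2 \<and> x$3 = y$3 \<and> x$4 = y$4 \<and> x$5 = y$5 \<and> x$6 = y$6 \<and> x$7 = y$7 \<and> x$8 = y$8"
proof
  assume h: "x$1 = y$1 \<and> x$2 = y$2 \<and> x$3 = y$3 \<and> x$4 = y$4 \<and> x$5 = y$5 \<and> x$6 = y$6 \<and> x$7 = y$7 \<and> x$8 = y$8"
  show "x = y" unfolding vec_eq_iff
  proof
    fix i :: 8
    from ex8[of i] h show "x$i = y$i" by auto
  qed
qed simp

lemma of_octp_nth[simp]:
  "of_octp p $ 1 = fst (fst (fst p))" "of_octp p $ 2 = snd (fst (fst p))"
  "of_octp p $ 3 = fst (snd (fst p))" "of_octp p $ 4 = snd (snd (fst p))"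
  "of_octp p $ 5 = fst (fst (snd p))" "of_octp p $ 6 = snd (fst (snd p))"
  "of_octp p $ 7 = fst (snd (snd p))" "of_octp p $ 8 = snd (snd (snd p))"
  by (simp_all add: of_octp_def)

lemmas cd_simps = omult_def mult3_def mult2_def mult1_def cd_mult_def conj3_def conj2_def conj1_def
  cd_conj_def scale2_def scale1_def cd_scale_def to_octp_def oconj_def oone_def

lemma omult_nth:
  "omult \<alpha> \<beta> \<gamma> x y $ 1 = \<alpha>*\<beta>*\<gamma>*x$8*y$8 - \<alpha>*\<beta>*x$4*y$4 - \<alpha>*\<gamma>*x$6*y$6 + \<alpha>*x$2*y$2 - \<beta>*\<gamma>*x$7*y$7 + \<beta>*x$3*y$3 + \<gamma>*x$5*y$5 + x$1*y$1"
  "omult \<alpha> \<beta> \<gamma> x y $ 2 = \<beta>*\<gamma>*x$7*y$8 - \<beta>*\<gamma>*x$8*y$7 + \<beta>*x$3*y$4 - \<beta>*x$4*y$3 + \<gamma>*x$5*y$6 - \<gamma>*x$6*y$5 + x$1*y$2 + x$2*y$1"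
  "omult \<alpha> \<beta> \<gamma> x y $ 3 = -\<alpha>*\<gamma>*x$6*y$8 + \<alpha>*\<gamma>*x$8*y$6 - \<alpha>*x$2*y$4 + \<alpha>*x$4*y$2 + \<gamma>*x$5*y$7 - \<gamma>*x$7*y$5 + x$1*y$3 + x$3*y$1"
  "omult \<alpha> \<beta> \<gamma> x y $ 4 = \<gamma>*x$5*y$8 - \<gamma>*x$6*y$7 + \<gamma>*x$7*y$6 - \<gamma>*x$8*y$5 + x$1*y$4 - x$2*y$3 + x$3*y$2 + x$4*y$1"
  "omult \<alpha> \<beta> \<gamma> x y $ 5 = \<alpha>*\<beta>*x$4*y$8 - \<alpha>*\<beta>*x$8*y$4 - \<alpha>*x$2*y$6 + \<alpha>*x$6*y$2 - \<beta>*x$3*y$7 + \<beta>*x$7*y$3 + x$1*y$5 + x$5*y$1"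
  "omult \<alpha> \<beta> \<gamma> x y $ 6 = -\<beta>*x$3*y$8 + \<beta>*x$4*y$7 - \<beta>*x$7*y$4 + \<beta>*x$8*y$3 + x$1*y$6 - x$2*y$5 + x$5*y$2 + x$6*y$1"
  "omult \<alpha> \<beta> \<gamma> x y $ 7 = \<alpha>*x$2*y$8 - \<alpha>*x$4*y$6 + \<alpha>*x$6*y$4 - \<alpha>*x$8*y$2 + x$1*y$7 - x$3*y$5 + x$5*y$3 + x$7*y$1"
  "omult \<alpha> \<beta> \<gamma> x y $ 8 = x$1*y$8 + x$2*y$7 - x$3*y$6 - x$4*y$5 + x$5*y$4 + x$6*y$3 - x$7*y$2 + x$8*y$1"
  by (simp_all add: cd_simps algebra_simps)

lemma oconj_nth: "oconj x $ 1 = x $ 1" "oconj x $ 2 = - x $ 2" "oconj x $ 3 = - x $ 3" "oconj x $ 4 = - x $ 4"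
  "oconj x $ 5 = - x $ 5" "oconj x $ 6 = - x $ 6" "oconj x $ 7 = - x $ 7" "oconj x $ 8 = - x $ 8"
  by (simp_all add: cd_simps)

lemma oone_nth: "oone $ 1 = 1" "oone $ 2 = 0" "oone $ 3 = 0" "oone $ 4 = 0"
  "oone $ 5 = 0" "oone $ 6 = 0" "oone $ 7 = 0" "oone $ 8 = 0"
  by (simp_all add: cd_simps)

definition obil :: "'a::field \<Rightarrow> 'a \<Rightarrow> 'a \<Rightarrow> 'a^8 \<Rightarrow> 'a^8 \<Rightarrow> 'a" where
 "obil \<alpha> \<beta> \<gamma> x y = x$1*y$1 - \<alpha>*x$2*y$2 - \<beta>*x$3*y$3 + \<alpha>*\<beta>*x$4*y$4 - \<gamma>*x$5*y$5
    + \<alpha>*\<gamma>*x$6*y$6 + \<beta>*\<gamma>*x$7*y$7 - \<alpha>*\<beta>*\<gamma>*x$8*y$8"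

definition otr :: "'a::field^8 \<Rightarrow> 'a" where "otr x = 2 * x$1"

lemmas csimps = omult_nth oconj_nth oone_nth vector_add_component vector_smult_component
  vector_minus_component vector_uminus_component zero_index obil_def otr_def

context fixes \<alpha> \<beta> \<gamma> :: "'a::field"
begin

lemma mult_add_left: "omult \<alpha> \<beta> \<gamma> (x + y) z = omult \<alpha> \<beta> \<gamma> x z + omult \<alpha> \<beta> \<gamma> y z"
  unfolding vec8_eq by (simp add: csimps algebra_simps)
lemma mult_add_right: "omult \<alpha> \<beta> \<gamma> z (x + y) = omult \<alpha> \<beta> \<gamma> z x + omult \<alpha> \<beta> \<gamma> z y"
  unfolding vec8_eq by (simp add: csimps algebra_simps)
lemma mult_diff_left: "omult \<alpha> \<beta> \<gamma> (x - y) z = omult \<alpha> \<beta> \<gamma> x z - omult \<alpha> \<beta> \<gamma> y z"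
  unfolding vec8_eq by (simp add: csimps algebra_simps)
lemma mult_diff_right: "omult \<alpha> \<beta> \<gamma> z (x - y) = omult \<alpha> \<beta> \<gamma> z x - omult \<alpha> \<beta> \<gamma> z y"
  unfolding vec8_eq by (simp add: csimps algebra_simps)
lemma mult_neg_left: "omult \<alpha> \<beta> \<gamma> (- x) z = - omult \<alpha> \<beta> \<gamma> x z"
  unfolding vec8_eq by (simp add: csimps algebra_simps)
lemma mult_neg_right: "omult \<alpha> \<beta> \<gamma> z (- x) = - omult \<alpha> \<beta> \<gamma> z x"
  unfolding vec8_eq by (simp add: csimps algebra_simps)
lemma mult_smult_left: "omult \<alpha> \<beta> \<gamma> (k *s x) z = k *s omult \<alpha> \<beta> \<gamma> x z"
  unfolding vec8_eq by (simp add: csimps algebra_simps)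
lemma mult_smult_right: "omult \<alpha> \<beta> \<gamma> z (k *s x) = k *s omult \<alpha> \<beta> \<gamma> z x"
  unfolding vec8_eq by (simp add: csimps algebra_simps)
lemma mult_zero_left: "omult \<alpha> \<beta> \<gamma> 0 z = 0"
  unfolding vec8_eq by (simp add: csimps)
lemma mult_zero_right: "omult \<alpha> \<beta> \<gamma> z 0 = 0"
  unfolding vec8_eq by (simp add: csimps)
lemma one_mult: "omult \<alpha> \<beta> \<gamma> oone x = x"
  unfolding vec8_eq by (simp add: csimps)
lemma mult_one: "omult \<alpha> \<beta> \<gamma> x oone = x"
  unfolding vec8_eq by (simp add: csimps)
lemma quad: "omult \<alpha> \<beta> \<gamma> x x = otr x *s x - obil \<alpha> \<beta> \<gamma> x x *s oone"
  unfolding vec8_eq by (simp add: csimps algebra_simps)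
lemma conj_mult: "oconj (omult \<alpha> \<beta> \<gamma> x y) = omult \<alpha> \<beta> \<gamma> (oconj y) (oconj x)"
  unfolding vec8_eq by (simp add: csimps algebra_simps)
lemma mult_first: "omult \<alpha> \<beta> \<gamma> x y $ 1 = obil \<alpha> \<beta> \<gamma> x (oconj y)"
  by (simp add: csimps algebra_simps)

end

lemma conj_eq: "oconj x = otr x *s oone - x"
  unfolding vec8_eq by (simp add: csimps)
lemma conj_conj: "oconj (oconj x) = x"
  unfolding vec8_eq by (simp add: csimps)
lemma conj_add: "oconj (x + y) = oconj x + oconj y"
  unfolding vec8_eq by (simp add: csimps)
lemma conj_smult: "oconj (k *s x) = k *s oconj x"
  unfolding vec8_eq by (simp add: csimps)
lemma otr_add: "otr (x + y) = otr x + otr y" by (simp add: csimps algebra_simps)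
lemma otr_diff: "otr (x - y) = otr x - otr y" by (simp add: csimps algebra_simps)
lemma otr_smult: "otr (k *s x) = k * otr x" by (simp add: csimps algebra_simps)
lemma otr_one: "otr (oone::'a::field^8) = 2" by (simp add: csimps)
lemma obil_sym: "obil a b c x y = obil a b c y x" by (simp add: obil_def algebra_simps)
lemma obil_add_left: "obil a b c (x + z) y = obil a b c x y + obil a b c z y" by (simp add: csimps algebra_simps)
lemma obil_add_right: "obil a b c y (x + z) = obil a b c y x + obil a b c y z" by (simp add: csimps algebra_simps)
lemma obil_diff_left: "obil a b c (x - z) y = obil a b c x y - obil a b c z y" by (simp add: csimps algebra_simps)
lemma obil_diff_right: "obil a b c y (x - z) = obil a b c y x - obil a b c y z" by (simp add: csimps algebra_simps)
lemma obil_smult_left: "obil a b c (k *s x) y = k * obil a b c x y" by (simp add: csimps algebra_simps)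
lemma obil_smult_right: "obil a b c y (k *s x) = k * obil a b c y x" by (simp add: csimps algebra_simps)
lemma obil_zero_left: "obil a b c 0 y = 0" by (simp add: csimps)
lemma obil_zero_right: "obil a b c y 0 = 0" by (simp add: csimps)
lemma obil_neg_left: "obil a b c (- x) y = - obil a b c x y" by (simp add: csimps algebra_simps)
lemma obil_neg_right: "obil a b c y (- x) = - obil a b c y x" by (simp add: csimps algebra_simps)
lemma obil_one_left: "obil a b c oone y = y $ 1" by (simp add: csimps)
lemma obil_one_right: "obil a b c y oone = y $ 1" by (simp add: csimps)
lemma obil_conj: "obil a b c (oconj x) (oconj y) = obil a b c x y" by (simp add: csimps)



context fixes \<alpha> \<beta> \<gamma> :: "'a::field"
begin
lemma lalt: "omult \<alpha> \<beta> \<gamma> x (omult \<alpha> \<beta> \<gamma> x y) = omult \<alpha> \<beta> \<gamma> (omult \<alpha> \<beta> \<gamma> x x) y"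
  unfolding vec8_eq by (intro conjI; simp only: omult_nth; simp add: algebra_simps)
end


context fixes \<alpha> \<beta> \<gamma> :: "'a::field"
begin
lemma adj1: "obil \<alpha> \<beta> \<gamma> a (omult \<alpha> \<beta> \<gamma> b c) = obil \<alpha> \<beta> \<gamma> (omult \<alpha> \<beta> \<gamma> (oconj b) a) c"
  by (simp only: obil_def omult_nth oconj_nth; simp add: algebra_simps)

end


lemma vec_lin_eq: "(x::('a::field)^'n) = y \<longleftrightarrow> (\<forall>i. x$i = y$i)" by (simp add: vec_eq_iff)

locale oct = fixes \<alpha> \<beta> \<gamma> :: "'a::field"
begin

abbreviation mul (infixl "\<odot>" 70) where "x \<odot> y \<equiv> omult \<alpha> \<beta> \<gamma> x y"
abbreviation bf where "bf \<equiv> obil \<alpha> \<beta> \<gamma>"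
abbreviation nf where "nf x \<equiv> obil \<alpha> \<beta> \<gamma> x x"

lemmas mlin = mult_add_left mult_add_right mult_diff_left mult_diff_right mult_neg_left mult_neg_right
  mult_smult_left mult_smult_right mult_zero_left mult_zero_right one_mult mult_one
lemmas blin = obil_add_left obil_add_right obil_diff_left obil_diff_right obil_smult_left obil_smult_right
  obil_zero_left obil_zero_right obil_neg_left obil_neg_right obil_one_left obil_one_right

lemma ralt: "(y \<odot> x) \<odot> x = y \<odot> (x \<odot> x)"
proof -
  have "oconj ((y \<odot> x) \<odot> x) = oconj x \<odot> (oconj x \<odot> oconj y)" by (simp add: conj_mult)
  also have "\<dots> = (oconj x \<odot> oconj x) \<odot> oconj y" by (rule lalt)
  also have "\<dots> = oconj (y \<odot> (x \<odot> x))" by (simp add: conj_mult)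
  finally show ?thesis by (metis conj_conj)
qed

lemma nf_add: "nf (x + z) = nf x + 2 * bf x z + nf z"
  by (simp add: blin obil_sym[of _ _ _ z x] algebra_simps)

lemma lin_quad: "x \<odot> z + z \<odot> x = otr x *s z + otr z *s x - (2 * bf x z) *s oone"
proof -
  have e: "(x + z) \<odot> (x + z) = x \<odot> x + x \<odot> z + z \<odot> x + z \<odot> z" by (simp add: mlin)
  have "x \<odot> x + x \<odot> z + z \<odot> x + z \<odot> z = otr (x + z) *s (x + z) - nf (x + z) *s oone"
    using quad[of \<alpha> \<beta> \<gamma> "x + z"] e by simp
  then show ?thesis unfolding quad[of \<alpha> \<beta> \<gamma> x] quad[of \<alpha> \<beta> \<gamma> z] nf_add otr_add
    by (simp add: vec_lin_eq algebra_simps)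
qed

lemma lin_lalt: "x \<odot> (z \<odot> y) + z \<odot> (x \<odot> y) = (x \<odot> z + z \<odot> x) \<odot> y"
proof -
  have "(x + z) \<odot> ((x + z) \<odot> y) = ((x + z) \<odot> (x + z)) \<odot> y" by (rule lalt)
  then show ?thesis using lalt[of \<alpha> \<beta> \<gamma> x y] lalt[of \<alpha> \<beta> \<gamma> z y]
    by (simp add: mlin vec_lin_eq algebra_simps)
qed

lemma lin_ralt: "(y \<odot> x) \<odot> z + (y \<odot> z) \<odot> x = y \<odot> (x \<odot> z + z \<odot> x)"
proof -
  have "(y \<odot> (x + z)) \<odot> (x + z) = y \<odot> ((x + z) \<odot> (x + z))" by (rule ralt)
  then show ?thesis using ralt[of y x] ralt[of y z]
    by (simp add: mlin vec_lin_eq algebra_simps)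
qed

lemma flex: "(x \<odot> y) \<odot> x = x \<odot> (y \<odot> x)"
  using lin_lalt[of x y x] ralt[of y x] by (simp add: mlin vec_lin_eq algebra_simps)

lemma conj_mult_self: "oconj x \<odot> x = nf x *s oone"
  unfolding conj_eq by (simp add: mlin quad vec_lin_eq algebra_simps)

lemma mult_conj_self: "x \<odot> oconj x = nf x *s oone"
  unfolding conj_eq by (simp add: mlin quad vec_lin_eq algebra_simps)

lemma lalt_conj: "oconj x \<odot> (x \<odot> y) = (oconj x \<odot> x) \<odot> y"
  unfolding conj_eq by (simp add: mlin lalt)

lemma bf_conj_left: "bf (oconj u) v = bf u (oconj v)"
  using obil_conj[of \<alpha> \<beta> \<gamma> u "oconj v"] by (simp add: conj_conj)

lemma adj2: "bf a (b \<odot> c) = bf (a \<odot> oconj c) b"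
proof -
  have "bf a (b \<odot> c) = bf (oconj a) (oconj c \<odot> oconj b)"
    by (metis conj_mult obil_conj)
  also have "\<dots> = bf (c \<odot> oconj a) (oconj b)"
    by (simp add: adj1 conj_conj)
  also have "\<dots> = bf (a \<odot> oconj c) b"
    by (metis bf_conj_left conj_conj conj_mult)
  finally show ?thesis .
qed

lemma nf_mult: "nf (x \<odot> y) = nf x * nf y"
proof -
  have "nf (x \<odot> y) = bf (oconj x \<odot> (x \<odot> y)) y" by (rule adj1)
  also have "\<dots> = nf x * nf y"
    by (simp add: lalt_conj conj_mult_self mlin blin)
  finally show ?thesis .
qed

lemma qwq: assumes "nf q = 0"
  shows "q \<odot> (w \<odot> q) = (otr w * otr q - 2 * bf w q) *s q"
proof -
  have wq: "w \<odot> q = otr w *s q + otr q *s w - (2 * bf w q) *s oone - q \<odot> w"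
    using lin_quad[of w q] by (simp add: vec_lin_eq algebra_simps)
  have qq: "q \<odot> q = otr q *s q" using quad[of \<alpha> \<beta> \<gamma> q] assms by simp
  have "q \<odot> (q \<odot> w) = otr q *s (q \<odot> w)" by (simp add: lalt qq mlin)
  then show ?thesis unfolding wq using qq
    by (simp add: mlin vec_lin_eq algebra_simps)
qed

end


lemma oone_ne0: "(oone::'a::field^8) \<noteq> 0"
proof
  assume "(oone::'a^8) = 0"
  then have "(oone::'a^8) $ 1 = 0" by simp
  then show False by (simp add: oone_nth)
qed

lemma smult_solve: "(d::'a::field) \<noteq> 0 \<Longrightarrow> d *s v = w \<Longrightarrow> v = (1/d) *s w"
  by (metis vector_smult_assoc vector_smult_lid nonzero_divide_eq_eq divide_inverse_commute
      divide_self_if mult.commute)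

lemma add_solve: "(a::'b::ab_group_add) + b = c \<Longrightarrow> b = c - a"
  by (metis add_diff_cancel_left')

context oct
begin

lemma imag_conj: "x $ 1 = 0 \<Longrightarrow> oconj x = - x"
  by (simp add: conj_eq otr_def)

lemma imag_otr: "x $ 1 = 0 \<Longrightarrow> otr x = 0"
  by (simp add: otr_def)

lemma nondeg:
  assumes params: "\<alpha> \<noteq> 0" "\<beta> \<noteq> 0" "\<gamma> \<noteq> 0" and "x \<noteq> 0"
  shows "\<exists>c. bf x c \<noteq> 0"
proof -
  from \<open>x \<noteq> 0\<close> obtain i where i: "x $ i \<noteq> 0" by (metis vec_eq_iff zero_index)
  have "bf x (axis i 1) \<noteq> 0"
    using ex8[of i] i params by (auto simp: obil_def axis_def)
  then show ?thesis by blast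
qed

lemma core:
  assumes params: "\<alpha> \<noteq> 0" "\<beta> \<noteq> 0" "\<gamma> \<noteq> 0" and ch: "(2::'a) \<noteq> 0"
    and pp: "p \<odot> p = p" and p1: "p $ 1 = 1/2"
    and px: "p \<odot> x = 0" and xp: "x \<odot> p = x" and x1: "x $ 1 = 0" and xnz: "x \<noteq> 0"
    and py: "p \<odot> y = 0" and yp: "y \<odot> p = y" and yx: "y \<odot> x = 0"
  shows "\<exists>t. y = t *s x"
proof -
  define q where "q = oone - p"
  have otrp: "otr p = 1" using p1 ch by (simp add: otr_def field_simps)
  have qq: "q \<odot> q = q" by (simp add: q_def mlin pp)
  have q1: "q $ 1 = 1/2" using p1 ch by (simp add: q_def oone_nth field_simps)
  have otrq: "otr q = 1" using q1 ch by (simp add: otr_def field_simps)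
  have nfq: "nf q = 0"
  proof -
    have "q = q - nf q *s oone" using quad[of \<alpha> \<beta> \<gamma> q] qq otrq by simp
    then have "nf q *s oone = 0" by (simp add: algebra_simps)
    then show ?thesis using oone_ne0[where 'a='a] by simp
  qed
  have conjq: "oconj q = p" unfolding conj_eq otrq by (simp add: q_def)
  have conjp: "oconj p = q" unfolding conj_eq otrp by (simp add: q_def)
  have qx: "q \<odot> x = x" by (simp add: q_def mlin px)
  from nondeg[OF params xnz] obtain c where c: "bf x c \<noteq> 0" by blast
  define d where "d = (p \<odot> c) \<odot> q"
  have d_alt: "d = p \<odot> c - (p \<odot> c) \<odot> p" by (simp add: d_def q_def mlin)
  have dp: "d \<odot> p = 0" unfolding d_alt by (simp add: mlin ralt pp)
  have pd: "p \<odot> d = d"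
  proof -
    have f1: "p \<odot> ((p \<odot> c) \<odot> p) = (p \<odot> (p \<odot> c)) \<odot> p" using flex[of p "p \<odot> c"] by simp
    have f2: "p \<odot> (p \<odot> c) = p \<odot> c" using lalt[of \<alpha> \<beta> \<gamma> p c] pp by simp
    show ?thesis unfolding d_alt by (simp add: mult_diff_right f1 f2)
  qed
  define w where "w = y \<odot> d"
  have wp: "w \<odot> p = 0"
    using lin_ralt[of y d p] by (simp add: w_def dp pd yp mlin)
  have pw: "p \<odot> w = 0"
    using lin_lalt[of p y d] by (simp add: w_def pd py yp mlin)
  have wq: "w \<odot> q = w" by (simp add: q_def mlin wp)
  have qw: "q \<odot> w = w" by (simp add: q_def mlin pw)
  define s where "s = otr w * otr q - 2 * bf w q"
  have ws: "w = s *s q" using qwq[OF nfq, of w] wq qw by (simp add: s_def)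
  have wx: "w \<odot> x = s *s x" by (simp add: ws mlin qx)
  have comp: "w \<odot> x = - (2 * bf d x) *s y"
  proof -
    have "(y \<odot> d) \<odot> x + (y \<odot> x) \<odot> d = y \<odot> (d \<odot> x + x \<odot> d)" by (rule lin_ralt)
    also have "\<dots> = y \<odot> (otr d *s x - (2 * bf d x) *s oone)"
      using lin_quad[of d x] imag_otr[OF x1] by simp
    finally show ?thesis using yx by (simp add: w_def mlin)
  qed
  have bfdx: "bf d x = bf x c"
  proof -
    have "bf d x = bf x ((p \<odot> c) \<odot> q)" by (simp add: d_def obil_sym)
    also have "\<dots> = bf (x \<odot> oconj q) (p \<odot> c)" by (rule adj2)
    also have "\<dots> = bf x (p \<odot> c)" by (simp add: conjq xp)
    also have "\<dots> = bf (oconj p \<odot> x) c" by (rule adj1)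
    also have "\<dots> = bf x c" by (simp add: conjp qx)
    finally show ?thesis .
  qed
  have "s *s x = - (2 * bf x c) *s y" using wx comp bfdx by simp
  then have "y = (- s / (2 * bf x c)) *s x"
    using c ch by (simp add: vec_lin_eq field_simps)
  then show ?thesis by blast
qed


definition good where "good x y \<longleftrightarrow> (\<forall>a b c d. a *s oone + b *s x + c *s y + d *s (x \<odot> y) = 0 \<longrightarrow> a = 0 \<and> b = 0 \<and> c = 0 \<and> d = 0)"

definition indep2 :: "'a^8 \<Rightarrow> 'a^8 \<Rightarrow> bool" where "indep2 x y \<longleftrightarrow> (\<forall>a b. a *s x + b *s y = 0 \<longrightarrow> a = 0 \<and> b = 0)"

lemma bf_prod_one: "x $ 1 = 0 \<Longrightarrow> y $ 1 = 0 \<Longrightarrow> bf oone (x \<odot> y) = - bf x y"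
  by (simp add: obil_one_left mult_first imag_conj obil_neg_right)

lemma bf_x_prod: "y $ 1 = 0 \<Longrightarrow> bf x (x \<odot> y) = 0"
  by (simp add: adj1 conj_mult_self mlin obil_smult_left obil_one_left)

lemma bf_y_prod: "x $ 1 = 0 \<Longrightarrow> bf y (x \<odot> y) = 0"
  by (simp add: adj2 mult_conj_self mlin obil_smult_left obil_one_left)

lemma imag_sq: "x $ 1 = 0 \<Longrightarrow> x \<odot> x = - nf x *s oone"
  using quad[of \<alpha> \<beta> \<gamma> x] by (simp add: otr_def vector_smult_lneg)

lemma imag_anti: "x $ 1 = 0 \<Longrightarrow> y $ 1 = 0 \<Longrightarrow> y \<odot> x = - (x \<odot> y) - (2 * bf x y) *s oone"
proof -
  assume a: "x $ 1 = 0" "y $ 1 = 0"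
  have e: "x \<odot> y + y \<odot> x = otr x *s y + otr y *s x - (2 * bf x y) *s oone" by (rule lin_quad)
  have h: "y \<odot> x = (otr x *s y + otr y *s x - (2 * bf x y) *s oone) - x \<odot> y" using add_solve[OF e] .
  show ?thesis unfolding h using imag_otr[OF a(1)] imag_otr[OF a(2)] by (simp add: algebra_simps)
qed

lemma gram:
  assumes x1: "x $ 1 = 0" and y1: "y $ 1 = 0" and nx: "nf x \<noteq> 0" and ny: "nf y \<noteq> 0"
    and bxy: "bf x y = 0"
  shows "good x y"
  unfolding good_def
proof (intro allI impI)
  fix a b c d assume h: "a *s oone + b *s x + c *s y + d *s (x \<odot> y) = 0"
  let ?v = "a *s oone + b *s x + c *s y + d *s (x \<odot> y)"
  have p1: "bf oone (x \<odot> y) = 0" using bf_prod_one[OF x1 y1] bxy by simp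
  have p2: "bf x (x \<odot> y) = 0" by (rule bf_x_prod[OF y1])
  have p3: "bf y (x \<odot> y) = 0" by (rule bf_y_prod[OF x1])
  have p4: "bf (x \<odot> y) (x \<odot> y) = nf x * nf y" by (rule nf_mult)
  have byx: "bf y x = 0" using bxy by (simp add: obil_sym)
  have e1: "bf oone ?v = a" using p1 x1 y1 by (simp add: blin oone_nth)
  have e2: "bf x ?v = b * nf x" using p2 x1 bxy by (simp add: blin)
  have e3: "bf y ?v = c * nf y" using p3 y1 byx by (simp add: blin)
  have q1: "bf (x \<odot> y) oone = 0" using p1 by (simp add: obil_sym)
  have q2: "bf (x \<odot> y) x = 0" using p2 by (simp add: obil_sym)
  have q3: "bf (x \<odot> y) y = 0" using p3 by (simp add: obil_sym)
  have e4: "bf (x \<odot> y) ?v = d * (nf x * nf y)"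
    using q1 q2 q3 p4 by (simp add: blin)
  have z: "\<And>w. bf w ?v = 0" using h by (simp add: obil_zero_right)
  from e1 z[of oone] have "a = 0" by simp
  moreover from e2 z[of x] nx have "b = 0" by simp
  moreover from e3 z[of y] ny have "c = 0" by simp
  moreover from e4 z[of "x \<odot> y"] nx ny have "d = 0" by simp
  ultimately show "a = 0 \<and> b = 0 \<and> c = 0 \<and> d = 0" by simp
qed

lemma iso_pair:
  assumes y1: "y $ 1 = 0" and z1: "z $ 1 = 0" and ny: "nf y = 0" and nz: "nf z = 0"
    and ind: "indep2 y z" and ng: "\<not> good y z"
  shows "y \<odot> z = 0"
proof -
  have ind3: "k0 = 0 \<and> k1 = 0 \<and> k2 = 0" if "k0 *s oone + k1 *s y + k2 *s z = 0" for k0 k1 k2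
  proof -
    have "(k0 *s oone + k1 *s y + k2 *s z) $ 1 = 0" using that by simp
    then have k0: "k0 = 0" using y1 z1 by (simp add: oone_nth)
    then have "k1 *s y + k2 *s z = 0" using that by simp
    with ind k0 show ?thesis by (simp add: indep2_def)
  qed
  from ng obtain a b c d where h: "a *s oone + b *s y + c *s z + d *s (y \<odot> z) = 0"
    and nz4: "\<not> (a = 0 \<and> b = 0 \<and> c = 0 \<and> d = 0)"
    unfolding good_def by blast
  have d: "d \<noteq> 0"
  proof
    assume "d = 0"
    then have "a *s oone + b *s y + c *s z = 0" using h by simp
    with ind3 nz4 \<open>d = 0\<close> show False by blast
  qed
  define a' b' c' where "a' = - a / d" and "b' = - b / d" and "c' = - c / d"
  have "d *s (y \<odot> z) = 0 - (a *s oone + b *s y + c *s z)"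
    by (rule add_solve) (use h in \<open>simp add: algebra_simps\<close>)
  from smult_solve[OF d this]
  have yz: "y \<odot> z = a' *s oone + b' *s y + c' *s z"
    unfolding a'_def b'_def c'_def by (simp add: vector_add_ldistrib vector_smult_assoc vector_smult_lneg vector_smult_rneg)
  have yy: "y \<odot> y = 0" using imag_sq[OF y1] ny by simp
  have zz: "z \<odot> z = 0" using imag_sq[OF z1] nz by simp
  have "y \<odot> (y \<odot> z) = 0" by (simp add: lalt yy mlin)
  then have h0: "y \<odot> (a' *s oone + b' *s y + c' *s z) = 0" unfolding yz .
  have h00: "y \<odot> (a' *s oone + b' *s y + c' *s z) = a' *s y + c' *s (y \<odot> z)" by (simp add: mlin yy)
  have h1: "a' *s y + c' *s (y \<odot> z) = 0" using h0 h00 by simp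
  have "(c' * a') *s oone + (a' + c' * b') *s y + (c' * c') *s z = a' *s y + c' *s (y \<odot> z)"
    unfolding yz by (simp add: vector_add_ldistrib vector_smult_assoc vector_sadd_rdistrib algebra_simps)
  with h1 have "(c' * a') *s oone + (a' + c' * b') *s y + (c' * c') *s z = 0" by simp
  then have "c' * a' = 0 \<and> a' + c' * b' = 0 \<and> c' * c' = 0" by (rule ind3)
  then have ac: "a' = 0" "c' = 0" by auto
  have yz2: "y \<odot> z = b' *s y" using yz ac by simp
  have "(y \<odot> z) \<odot> z = 0" by (simp add: ralt zz mlin)
  then have "(b' * b') *s y = 0" unfolding yz2 by (simp add: mlin yz2)
  then have "b' * b' = 0" using ind by (auto simp: indep2_def)
  then show ?thesis using yz2 by simp
qed

lemma aniso_iso: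
  assumes x1: "x $ 1 = 0" and nx: "nf x \<noteq> 0" and y1: "y $ 1 = 0" and ny: "nf y = 0"
    and bxy: "bf x y = 0" and ynz: "y \<noteq> 0" and ng: "\<not> good x y"
  shows "\<exists>c. x \<odot> y = c *s y \<and> c * c = - nf x"
proof -
  from ng obtain a b c d where h: "a *s oone + b *s x + c *s y + d *s (x \<odot> y) = 0"
    and nz4: "\<not> (a = 0 \<and> b = 0 \<and> c = 0 \<and> d = 0)"
    unfolding good_def by blast
  let ?v = "a *s oone + b *s x + c *s y + d *s (x \<odot> y)"
  have p1: "bf oone (x \<odot> y) = 0" using bf_prod_one[OF x1 y1] bxy by simp
  have p2: "bf x (x \<odot> y) = 0" by (rule bf_x_prod[OF y1])
  have "bf oone ?v = a" using p1 x1 y1 by (simp add: blin oone_nth)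
  then have a: "a = 0" using h by (simp add: blin)
  have "bf x ?v = b * nf x" using p2 x1 bxy by (simp add: blin)
  then have b: "b = 0" using h nx by (simp add: blin)
  have d: "d \<noteq> 0"
  proof
    assume "d = 0"
    then have "c *s y = 0" using h a b by simp
    then have "c = 0" using ynz by simp
    with a b \<open>d = 0\<close> nz4 show False by simp
  qed
  define k where "k = - c / d"
  have "d *s (x \<odot> y) = 0 - c *s y"
    by (rule add_solve) (use h a b in \<open>simp add: algebra_simps\<close>)
  from smult_solve[OF d this]
  have xy: "x \<odot> y = k *s y" unfolding k_def by (simp add: vector_smult_assoc vector_smult_rneg vector_smult_lneg)
  have "x \<odot> (x \<odot> y) = (- nf x) *s y" by (simp add: lalt imag_sq[OF x1] mlin vector_smult_lneg)
  moreover have "x \<odot> (x \<odot> y) = (k * k) *s y" by (simp add: xy mlin vector_smult_assoc)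
  ultimately have e: "(k * k) *s y = (- nf x) *s y" by simp
  have "(k * k + nf x) *s y = 0" using e by (simp add: vector_sadd_rdistrib vector_smult_lneg)
  then have "k * k + nf x = 0" using ynz vector_mul_eq_0 by blast
  then have "k * k = - nf x" by (simp add: eq_neg_iff_add_eq_0)
  with xy show ?thesis by blast
qed


lemma indep2_nz: "indep2 y z \<Longrightarrow> y \<noteq> 0 \<and> z \<noteq> 0 \<and> y + z \<noteq> 0"
proof -
  assume h: "indep2 y z"
  have "y \<noteq> 0" using h[unfolded indep2_def, rule_format, of 1 0] by auto
  moreover have "z \<noteq> 0" using h[unfolded indep2_def, rule_format, of 0 1] by auto
  moreover have "y + z \<noteq> 0" using h[unfolded indep2_def, rule_format, of 1 1] by auto
  ultimately show ?thesis by blast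
qed

lemma indep2_sym: "indep2 y z \<Longrightarrow> indep2 z y"
proof -
  assume h: "indep2 y z"
  show ?thesis unfolding indep2_def
  proof (intro allI impI)
    fix a b assume "a *s z + b *s y = 0"
    then have "b *s y + a *s z = 0" by (simp add: add.commute[of "b *s y"])
    then show "a = 0 \<and> b = 0" using h unfolding indep2_def by blast
  qed
qed

lemma case_aniso:
  assumes params: "\<alpha> \<noteq> 0" "\<beta> \<noteq> 0" "\<gamma> \<noteq> 0" and ch: "(2::'a) \<noteq> 0"
    and x1: "x $ 1 = 0" and nx: "nf x \<noteq> 0" and y1: "y $ 1 = 0" and z1: "z $ 1 = 0"
    and bxy: "bf x y = 0" and bxz: "bf x z = 0" and ny: "nf y = 0" and nz: "nf z = 0"
    and byz: "bf y z = 0" and ind: "indep2 y z"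
    and g1: "\<not> good y z" and g2: "\<not> good z y" and g3: "\<not> good x y" and g4: "\<not> good x z"
    and g5: "\<not> good x (y + z)"
  shows False
proof -
  have zy: "z \<odot> y = 0" using iso_pair[OF z1 y1 nz ny indep2_sym[OF ind] g2] .
  have nzs: "y \<noteq> 0" "z \<noteq> 0" "y + z \<noteq> 0" using indep2_nz[OF ind] by auto
  have yz1: "(y + z) $ 1 = 0" using y1 z1 by simp
  have nyz: "nf (y + z) = 0" using ny nz byz by (simp add: nf_add)
  have bxyz: "bf x (y + z) = 0" using bxy bxz by (simp add: blin)
  obtain c1 where c1: "x \<odot> y = c1 *s y" "c1 * c1 = - nf x"
    using aniso_iso[OF x1 nx y1 ny bxy nzs(1) g3] by blast
  obtain c2 where c2: "x \<odot> z = c2 *s z" "c2 * c2 = - nf x"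
    using aniso_iso[OF x1 nx z1 nz bxz nzs(2) g4] by blast
  obtain c3 where c3: "x \<odot> (y + z) = c3 *s (y + z)"
    using aniso_iso[OF x1 nx yz1 nyz bxyz nzs(3) g5] by blast
  have "(c1 - c3) *s y + (c2 - c3) *s z = c1 *s y + c2 *s z - c3 *s (y + z)"
    by (simp add: vec_lin_eq algebra_simps)
  also have "\<dots> = x \<odot> y + x \<odot> z - x \<odot> (y + z)" using c1 c2 c3 by simp
  also have "\<dots> = 0" by (simp add: mlin)
  finally have "c1 - c3 = 0 \<and> c2 - c3 = 0" using ind unfolding indep2_def by blast
  then have c12: "c2 = c1" by simp
  define c where "c = c1"
  have cnz: "c \<noteq> 0" using c1(2) nx unfolding c_def by auto
  have xy: "x \<odot> y = c *s y" and xz: "x \<odot> z = c *s z" using c1 c2 c12 by (auto simp: c_def)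
  have cc: "c * c = - nf x" using c1 by (simp add: c_def)
  have yx: "y \<odot> x = - c *s y" using imag_anti[OF x1 y1] xy bxy by (simp add: vector_smult_lneg)
  have zx: "z \<odot> x = - c *s z" using imag_anti[OF x1 z1] xz bxz by (simp add: vector_smult_lneg)
  define p where "p = (1/2) *s oone - (1/(2*c)) *s x"
  have xx: "x \<odot> x = (c * c) *s oone" using imag_sq[OF x1] cc by (simp add: vector_smult_lneg)
  have four: "(4::'a) \<noteq> 0"
  proof
    assume h4: "(4::'a) = 0"
    have "(4::'a) = 2 * 2" by simp
    with h4 ch show False by (metis mult_eq_0_iff)
  qed
  have sixteen: "(16::'a) \<noteq> 0"
  proof
    assume h4: "(16::'a) = 0"
    have "(16::'a) = 4 * 4" by simp
    with h4 four show False by (metis mult_eq_0_iff)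
  qed
  have pp: "p \<odot> p = p"
    unfolding p_def using cnz ch four sixteen by (simp add: mlin xx vec_lin_eq field_simps)
  have p1: "p $ 1 = 1/2" using x1 by (simp add: p_def oone_nth)
  have py: "p \<odot> y = 0" using cnz ch by (simp add: p_def mlin xy vec_lin_eq field_simps)
  have yp: "y \<odot> p = y" using cnz ch by (simp add: p_def mlin yx vec_lin_eq field_simps)
  have pz: "p \<odot> z = 0" using cnz ch by (simp add: p_def mlin xz vec_lin_eq field_simps)
  have zp: "z \<odot> p = z" using cnz ch by (simp add: p_def mlin zx vec_lin_eq field_simps)
  obtain t where "z = t *s y" using core[OF params ch pp p1 py yp y1 nzs(1) pz zp zy] by blast
  then have "t *s y + (-1) *s z = 0" by simp
  then show False using ind[unfolded indep2_def, rule_format, of t "-1"] by simp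
qed

definition indep3 :: "'a^8 \<Rightarrow> 'a^8 \<Rightarrow> 'a^8 \<Rightarrow> bool" where "indep3 x y z \<longleftrightarrow> (\<forall>a b c. a *s x + b *s y + c *s z = 0 \<longrightarrow> a = 0 \<and> b = 0 \<and> c = 0)"

lemma case_iso:
  assumes params: "\<alpha> \<noteq> 0" "\<beta> \<noteq> 0" "\<gamma> \<noteq> 0" and ch: "(2::'a) \<noteq> 0"
    and x1: "x $ 1 = 0" and y1: "y $ 1 = 0" and z1: "z $ 1 = 0"
    and xx: "x \<odot> x = 0" and xy: "x \<odot> y = 0" and yx: "y \<odot> x = 0" and xz: "x \<odot> z = 0"
    and zx: "z \<odot> x = 0" and zy: "z \<odot> y = 0"
    and ind: "indep3 x y z"
  shows False
proof -
  have xnz: "x \<noteq> 0"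
  proof
    assume "x = 0" then have "1 *s x + 0 *s y + 0 *s z = 0" by simp
    then show False using ind[unfolded indep3_def, rule_format, of 1 0 0] by simp
  qed
  have nx: "nf x = 0"
  proof -
    have "nf x *s oone = 0" using imag_sq[OF x1] xx by (simp add: vector_smult_lneg)
    then show ?thesis using oone_ne0[where 'a='a] by simp
  qed
  from nondeg[OF params xnz] obtain c0 where c0: "bf x c0 \<noteq> 0" by blast
  define c1 where "c1 = c0 - c0 $ 1 *s oone"
  have bc1: "bf x c1 = bf x c0" using x1 by (simp add: c1_def blin)
  define c2 where "c2 = (- 1 / (2 * bf x c0)) *s c1"
  have bc2: "bf x c2 = - 1/2" using c0 ch by (simp add: c2_def blin bc1)
  have c21: "c2 $ 1 = 0" by (simp add: c2_def c1_def oone_nth)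
  define d where "d = c2 + nf c2 *s x"
  have d1: "d $ 1 = 0" using c21 x1 by (simp add: d_def)
  have bxd: "bf x d = - 1/2" using bc2 nx by (simp add: d_def blin)
  have bc2x: "bf c2 x = - 1/2" using bc2 by (simp add: obil_sym)
  have nd: "nf d = 0"
  proof -
    have "nf d = nf c2 + 2 * bf c2 (nf c2 *s x) + nf (nf c2 *s x)" unfolding d_def by (rule nf_add)
    also have "\<dots> = nf c2 + 2 * (nf c2 * bf c2 x) + nf c2 * (nf c2 * nf x)"
      by (simp add: obil_smult_left obil_smult_right)
    also have "\<dots> = nf c2 + nf c2 * (2 * bf c2 x)" using nx by (simp add: algebra_simps)
    also have "\<dots> = 0" using bc2x ch by simp
    finally show ?thesis .
  qed
  define p where "p = d \<odot> x"
  have p1: "p $ 1 = 1/2"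
    using bxd ch by (simp add: p_def mult_first imag_conj[OF x1] obil_neg_right obil_sym[of _ _ _ d x])
  have np: "nf p = 0" by (simp add: p_def nf_mult nd)
  have otrp: "otr p = 1" using p1 ch by (simp add: otr_def field_simps)
  have pp: "p \<odot> p = p" using quad[of \<alpha> \<beta> \<gamma> p] np otrp by simp
  have px: "p \<odot> x = 0" by (simp add: p_def ralt xx mult_zero_right)
  have xd: "x \<odot> d + d \<odot> x = oone"
    using lin_quad[of x d] imag_otr[OF x1] imag_otr[OF d1] bxd ch by simp
  have xp: "x \<odot> p = x"
    using lin_lalt[of x d x] unfolding p_def xd by (simp add: xx mlin)
  have shift: "p \<odot> (v + (2 * bf v d) *s x) = v + (2 * bf v d) *s x \<and> (v + (2 * bf v d) *s x) \<odot> p = 0"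
    if v1: "v $ 1 = 0" and vx: "v \<odot> x = 0" and xv: "x \<odot> v = 0" for v
  proof -
    have a1: "(d \<odot> x) \<odot> v + (d \<odot> v) \<odot> x = 0" using lin_ralt[of d x v] by (simp add: xv vx mlin)
    have a2: "d \<odot> v = - (v \<odot> d) - (2 * bf v d) *s oone" by (rule imag_anti[OF v1 d1])
    have a3: "(v \<odot> d) \<odot> x = v" using lin_ralt[of v d x] by (simp add: vx mlin add.commute[of "d \<odot> x"] xd)
    have pv: "p \<odot> v = v + (2 * bf v d) *s x"
    proof -
      have "p \<odot> v = - ((d \<odot> v) \<odot> x)" using a1 unfolding p_def by (simp add: eq_neg_iff_add_eq_0)
      also have "\<dots> = v + (2 * bf v d) *s x" unfolding a2 by (simp add: mlin a3)
      finally show ?thesis .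
    qed
    have vp: "v \<odot> p = - ((2 * bf v d) *s x)"
    proof -
      have "v \<odot> (d \<odot> x) + d \<odot> (v \<odot> x) = (v \<odot> d + d \<odot> v) \<odot> x" by (rule lin_lalt)
      then show ?thesis unfolding p_def a2 by (simp add: vx mlin)
    qed
    show ?thesis by (simp add: mlin pv vp px xp)
  qed
  define q where "q = oone - p"
  have qq: "q \<odot> q = q" by (simp add: q_def mlin pp)
  have q1: "q $ 1 = 1/2" using p1 ch by (simp add: q_def oone_nth field_simps)
  define y' where "y' = y + (2 * bf y d) *s x"
  define z' where "z' = z + (2 * bf z d) *s x"
  have sy: "p \<odot> y' = y'" "y' \<odot> p = 0" using shift[OF y1 yx xy] by (auto simp: y'_def)
  have sz: "p \<odot> z' = z'" "z' \<odot> p = 0" using shift[OF z1 zx xz] by (auto simp: z'_def)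
  have qy: "q \<odot> y' = 0" "y' \<odot> q = y'" using sy by (auto simp: q_def mlin)
  have qz: "q \<odot> z' = 0" "z' \<odot> q = z'" using sz by (auto simp: q_def mlin)
  have zy': "z' \<odot> y' = 0" by (simp add: y'_def z'_def mlin zy zx xy xx)
  have y'1: "y' $ 1 = 0" using y1 x1 by (simp add: y'_def)
  have y'nz: "y' \<noteq> 0"
  proof
    assume "y' = 0" then have "(2 * bf y d) *s x + 1 *s y + 0 *s z = 0" by (simp add: y'_def add.commute)
    then show False using ind[unfolded indep3_def, rule_format, of "2 * bf y d" 1 0] by simp
  qed
  obtain t where "z' = t *s y'" using core[OF params ch qq q1 qy y'1 y'nz qz zy'] by blast
  have "(2 * bf z d - t * (2 * bf y d)) *s x + (- t) *s y + 1 *s z = z' - t *s y'"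
    by (simp add: y'_def z'_def vec_lin_eq algebra_simps)
  also have "\<dots> = 0" using \<open>z' = t *s y'\<close> by simp
  finally show False using ind[unfolded indep3_def, rule_format, of "2 * bf z d - t * (2 * bf y d)" "- t" 1] by simp
qed

end


lemma indep4_set:
  fixes p1 p2 p3 p4 :: "'a::field^'n"
  assumes h: "\<forall>a b c d. a *s p1 + b *s p2 + c *s p3 + d *s p4 = 0 \<longrightarrow> a = 0 \<and> b = 0 \<and> c = 0 \<and> d = 0"
  shows "vec.independent {p1,p2,p3,p4} \<and> card {p1,p2,p3,p4} = 4"
proof -
  have d12: "p1 \<noteq> p2" using h[rule_format, of 1 "-1" 0 0] by auto
  have d13: "p1 \<noteq> p3" using h[rule_format, of 1 0 "-1" 0] by auto
  have d14: "p1 \<noteq> p4" using h[rule_format, of 1 0 0 "-1"] by auto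
  have d23: "p2 \<noteq> p3" using h[rule_format, of 0 1 "-1" 0] by auto
  have d24: "p2 \<noteq> p4" using h[rule_format, of 0 1 0 "-1"] by auto
  have d34: "p3 \<noteq> p4" using h[rule_format, of 0 0 1 "-1"] by auto
  have "vec.independent {p1,p2,p3,p4}"
    unfolding vec.independent_explicit
  proof (intro conjI allI impI)
    show "finite {p1,p2,p3,p4}" by simp
    fix f assume "(\<Sum>v\<in>{p1,p2,p3,p4}. f v *s v) = 0"
    then have "f p1 *s p1 + f p2 *s p2 + f p3 *s p3 + f p4 *s p4 = 0"
      using d12 d13 d14 d23 d24 d34 by (simp add: add.assoc)
    then have "f p1 = 0 \<and> f p2 = 0 \<and> f p3 = 0 \<and> f p4 = 0" using h by blast
    then show "\<forall>v\<in>{p1,p2,p3,p4}. f v = 0" by auto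
  qed
  moreover have "card {p1,p2,p3,p4} = 4" using d12 d13 d14 d23 d24 d34 by simp
  ultimately show ?thesis by blast
qed

lemma indep2_set:
  fixes u v :: "'a::field^'n"
  assumes h: "\<forall>a b. a *s u + b *s v = 0 \<longrightarrow> a = 0 \<and> b = 0"
  shows "vec.independent {u,v} \<and> card {u,v} = 2"
proof -
  have d: "u \<noteq> v" using h[rule_format, of 1 "-1"] by auto
  have "vec.independent {u,v}"
    unfolding vec.independent_explicit
  proof (intro conjI allI impI)
    show "finite {u,v}" by simp
    fix f assume "(\<Sum>w\<in>{u,v}. f w *s w) = 0"
    then have "f u *s u + f v *s v = 0" using d by simp
    then have "f u = 0 \<and> f v = 0" using h by blast
    then show "\<forall>w\<in>{u,v}. f w = 0" by auto
  qed
  then show ?thesis using d by simp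
qed

lemma span2: "w \<in> vec.span {x, y} \<longleftrightarrow> (\<exists>a b. w = a *s x + b *s y)"
proof
  assume "w \<in> vec.span {x, y}"
  then obtain k where "w - k *s x \<in> vec.span {y}" using vec.span_breakdown_eq by blast
  then obtain l where "w - k *s x = l *s y" by (auto simp: vec.span_singleton)
  then have "w = k *s x + l *s y" by (simp add: algebra_simps)
  then show "\<exists>a b. w = a *s x + b *s y" by blast
next
  assume "\<exists>a b. w = a *s x + b *s y"
  then obtain a b where "w = a *s x + b *s y" by blast
  then show "w \<in> vec.span {x, y}"
    by (simp add: vec.span_add vec.span_scale vec.span_base)
qed

context oct
begin

lemma oim_iff: fixes H :: "('a^8) set" assumes ch: "(2::'a) \<noteq> 0" shows "x \<in> oim H \<longleftrightarrow> x \<in> H \<and> x $ 1 = 0"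
proof -
  have "oconj x = - x \<longleftrightarrow> x $ 1 = 0"
  proof
    assume "oconj x = - x"
    then have "oconj x $ 1 = (- x) $ 1" by simp
    then have "x $ 1 = - x $ 1" by (simp add: oconj_nth)
    then have "2 * x $ 1 = 0" by simp
    then show "x $ 1 = 0" using ch by simp
  qed (rule imag_conj)
  then show ?thesis by (simp add: oim_def)
qed

lemma exists_nonzero:
  assumes ch: "(2::'a) \<noteq> 0" and sub: "is_subalgebra \<alpha> \<beta> \<gamma> H" and dimH: "vec.dim H = 4"
  shows "\<exists>x. x \<in> oim H \<and> x \<noteq> 0"
proof (rule ccontr)
  assume "\<not> ?thesis"
  then have all0: "\<And>x. x \<in> oim H \<Longrightarrow> x = 0" by blast
  have subH: "vec.subspace H" and oneH: "oone \<in> H" using sub by (auto simp: is_subalgebra_def)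
  have "H \<subseteq> vec.span {oone}"
  proof
    fix h assume hH: "h \<in> H"
    have "h - h $ 1 *s oone \<in> H" by (rule vec.subspace_diff[OF subH hH vec.subspace_scale[OF subH oneH]])
    moreover have "(h - h $ 1 *s oone) $ 1 = 0" by (simp add: oone_nth)
    ultimately have "h - h $ 1 *s oone = 0" using all0 oim_iff[OF ch] by blast
    then have "h = h $ 1 *s oone" by simp
    then show "h \<in> vec.span {oone}" by (metis vec.span_base vec.span_scale singletonI)
  qed
  then have "vec.dim H \<le> card {oone}" using vec.dim_le_card[of H "{oone}"] by simp
  then show False using dimH by simp
qed

lemma exists_triple:
  assumes ch: "(2::'a) \<noteq> 0" and sub: "is_subalgebra \<alpha> \<beta> \<gamma> H" and dimH: "vec.dim H = 4"
    and xV: "x \<in> oim H" and xnz: "x \<noteq> 0"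
  shows "\<exists>y z. y \<in> oim H \<and> z \<in> oim H \<and> indep3 x y z"
proof -
  have subH: "vec.subspace H" and oneH: "oone \<in> H" using sub by (auto simp: is_subalgebra_def)
  have xH: "x \<in> H" and x1: "x $ 1 = 0" using xV oim_iff[OF ch] by auto
  have ox: "oone \<noteq> x" using x1 by (auto simp: oone_nth)
  have ind0: "vec.independent {oone, x}"
  proof -
    have "oone \<notin> vec.span {x}"
    proof
      assume "oone \<in> vec.span {x}"
      then obtain k where "oone = k *s x" by (auto simp: vec.span_singleton)
      then have "oone $ 1 = (k *s x) $ 1" by simp
      then show False using x1 by (simp add: oone_nth)
    qed
    moreover have "vec.independent {x}" using xnz by simp
    ultimately show ?thesis using ox by (simp add: vec.independent_insert)
  qed
  obtain B where SB: "{oone, x} \<subseteq> B" and BH: "B \<subseteq> H" and indB: "vec.independent B" and HB: "H \<subseteq> vec.span B"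
    using vec.maximal_independent_subset_extend[of "{oone, x}" H] ind0 oneH xH by auto
  have cB: "card B = 4" using vec.basis_card_eq_dim[OF BH HB indB] dimH by simp
  have fB: "finite B" using cB by (metis card.infinite zero_neq_numeral)
  have "card (B - {oone, x}) = 2"
    using cB SB fB ox by (simp add: card_Diff_subset)
  then obtain h2 h3 where h23: "B - {oone, x} = {h2, h3}" and d23: "h2 \<noteq> h3" by (auto simp: card_2_iff)
  have Beq: "B = {oone, x, h2, h3}" using h23 SB by auto
  have nh: "h2 \<noteq> oone" "h2 \<noteq> x" "h3 \<noteq> oone" "h3 \<noteq> x" using h23 by auto
  have h2H: "h2 \<in> H" and h3H: "h3 \<in> H" using BH Beq by auto
  define y where "y = h2 - h2 $ 1 *s oone"
  define z where "z = h3 - h3 $ 1 *s oone"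
  have yV: "y \<in> oim H"
    unfolding oim_iff[OF ch] y_def
    using vec.subspace_diff[OF subH h2H vec.subspace_scale[OF subH oneH]] by (simp add: oone_nth)
  have zV: "z \<in> oim H"
    unfolding oim_iff[OF ch] z_def
    using vec.subspace_diff[OF subH h3H vec.subspace_scale[OF subH oneH]] by (simp add: oone_nth)
  have "indep3 x y z"
    unfolding indep3_def
  proof (intro allI impI)
    fix a b c assume abc: "a *s x + b *s y + c *s z = 0"
    define f where "f v = (if v = oone then - (b * h2 $ 1 + c * h3 $ 1) else if v = x then a
      else if v = h2 then b else if v = h3 then c else 0)" for v
    have ne: "x \<noteq> oone" "oone \<noteq> h2" "x \<noteq> h2" "oone \<noteq> h3" "x \<noteq> h3" "h3 \<noteq> h2"
      using ox nh d23 by auto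
    have f1: "f oone = - (b * h2 $ 1 + c * h3 $ 1)" by (simp add: f_def)
    have fx: "f x = a" using ne by (simp add: f_def)
    have f2: "f h2 = b" using ne nh by (simp add: f_def)
    have f3: "f h3 = c" using ne nh d23 by (simp add: f_def)
    have "(\<Sum>v\<in>B. f v *s v) = f oone *s oone + (f x *s x + (f h2 *s h2 + f h3 *s h3))"
      unfolding Beq using ox nh d23 by simp
    also have "\<dots> = a *s x + b *s y + c *s z"
      unfolding f1 fx f2 f3 y_def z_def by (simp add: vec_lin_eq algebra_simps)
    finally have "(\<Sum>v\<in>B. f v *s v) = 0" using abc by simp
    then have "\<forall>v\<in>B. f v = 0" using indB fB by (auto simp: vec.independent_explicit)
    then have "f x = 0" "f h2 = 0" "f h3 = 0" using Beq by auto
    then show "a = 0 \<and> b = 0 \<and> c = 0" using fx f2 f3 by simp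
  qed
  then show ?thesis using yV zV by blast
qed


lemma exists_good:
  assumes params: "\<alpha> \<noteq> 0" "\<beta> \<noteq> 0" "\<gamma> \<noteq> 0" and ch: "(2::'a) \<noteq> 0"
    and sub: "is_subalgebra \<alpha> \<beta> \<gamma> H" and dimH: "vec.dim H = 4"
  shows "\<exists>x y. x \<in> oim H \<and> y \<in> oim H \<and> good x y"
proof (rule ccontr)
  assume nG: "\<not> ?thesis"
  have ng: "\<not> good x y" if "x \<in> oim H" "y \<in> oim H" for x y using nG that by blast
  have subH: "vec.subspace H" using sub by (auto simp: is_subalgebra_def)
  have V1: "x $ 1 = 0" if "x \<in> oim H" for x using that oim_iff[OF ch] by auto
  have Vadd: "x + y \<in> oim H" if "x \<in> oim H" "y \<in> oim H" for x y
    using that oim_iff[OF ch] vec.subspace_add[OF subH] by auto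
  have Vscale: "k *s x \<in> oim H" if "x \<in> oim H" for x k
    using that oim_iff[OF ch] vec.subspace_scale[OF subH] by auto
  have Vdiff: "x - y \<in> oim H" if "x \<in> oim H" "y \<in> oim H" for x y
    using that oim_iff[OF ch] vec.subspace_diff[OF subH] by auto
  show False
  proof (cases "\<exists>x\<in>oim H. \<exists>y\<in>oim H. nf x \<noteq> 0 \<and> nf y \<noteq> 0 \<and> bf x y = 0")
    case True
    then obtain x y where "x \<in> oim H" "y \<in> oim H" "nf x \<noteq> 0" "nf y \<noteq> 0" "bf x y = 0" by blast
    then show False using gram[OF V1 V1] ng by blast
  next
    case False
    note noi = this
    show False
    proof (cases "\<exists>x\<in>oim H. nf x \<noteq> 0")
      case True
      then obtain x where xV: "x \<in> oim H" and nx: "nf x \<noteq> 0" by blast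
      have xnz: "x \<noteq> 0" using nx by (auto simp: obil_zero_left)
      obtain y0 z0 where y0V: "y0 \<in> oim H" and z0V: "z0 \<in> oim H" and ind: "indep3 x y0 z0"
        using exists_triple[OF ch sub dimH xV xnz] by blast
      define y where "y = y0 - (bf x y0 / nf x) *s x"
      define z where "z = z0 - (bf x z0 / nf x) *s x"
      have yV: "y \<in> oim H" unfolding y_def by (rule Vdiff[OF y0V Vscale[OF xV]])
      have zV: "z \<in> oim H" unfolding z_def by (rule Vdiff[OF z0V Vscale[OF xV]])
      have bxy: "bf x y = 0" using nx by (simp add: y_def blin)
      have bxz: "bf x z = 0" using nx by (simp add: z_def blin)
      have ny: "nf y = 0" using noi xV yV nx bxy by blast
      have nz: "nf z = 0" using noi xV zV nx bxz by blast
      have bxyz: "bf x (y + z) = 0" using bxy bxz by (simp add: blin)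
      have "nf (y + z) = 0" using noi xV Vadd[OF yV zV] nx bxyz by blast
      then have "2 * bf y z = 0" using ny nz by (simp add: nf_add)
      then have byz: "bf y z = 0" using ch by simp
      have ind2: "indep2 y z"
        unfolding indep2_def
      proof (intro allI impI)
        fix a b assume "a *s y + b *s z = 0"
        moreover have "a *s y + b *s z = (- (a * (bf x y0 / nf x) + b * (bf x z0 / nf x))) *s x + a *s y0 + b *s z0"
          by (simp add: y_def z_def vec_lin_eq algebra_simps)
        ultimately have "(- (a * (bf x y0 / nf x) + b * (bf x z0 / nf x))) *s x + a *s y0 + b *s z0 = 0" by simp
        then show "a = 0 \<and> b = 0" using ind unfolding indep3_def by blast
      qed
      show False
        using case_aniso[OF params ch V1[OF xV] nx V1[OF yV] V1[OF zV] bxy bxz ny nz byz ind2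
            ng[OF yV zV] ng[OF zV yV] ng[OF xV yV] ng[OF xV zV] ng[OF xV Vadd[OF yV zV]]] .
    next
      case False
      then have n0: "nf v = 0" if "v \<in> oim H" for v using that by blast
      obtain x where xV: "x \<in> oim H" and xnz: "x \<noteq> 0" using exists_nonzero[OF ch sub dimH] by blast
      obtain y z where yV: "y \<in> oim H" and zV: "z \<in> oim H" and ind: "indep3 x y z"
        using exists_triple[OF ch sub dimH xV xnz] by blast
      have b0: "bf u v = 0" if "u \<in> oim H" "v \<in> oim H" for u v
      proof -
        have "nf (u + v) = 0" using n0 Vadd that by blast
        then have "2 * bf u v = 0" using n0 that by (simp add: nf_add)
        then show ?thesis using ch by simp
      qed
      have i_xy: "indep2 x y" unfolding indep2_def
        using ind[unfolded indep3_def] by (metis add.right_neutral vector_smult_lzero)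
      have i_xz: "indep2 x z" unfolding indep2_def
      proof (intro allI impI)
        fix a b assume "a *s x + b *s z = 0"
        then have "a *s x + 0 *s y + b *s z = 0" by simp
        then show "a = 0 \<and> b = 0" using ind unfolding indep3_def by blast
      qed
      have i_yz: "indep2 y z" unfolding indep2_def
      proof (intro allI impI)
        fix a b assume "a *s y + b *s z = 0"
        then have "0 *s x + a *s y + b *s z = 0" by simp
        then show "a = 0 \<and> b = 0" using ind unfolding indep3_def by blast
      qed
      have prod0: "u \<odot> v = 0" if "u \<in> oim H" "v \<in> oim H" "indep2 u v" for u v
        using iso_pair[OF V1[OF that(1)] V1[OF that(2)] n0[OF that(1)] n0[OF that(2)] that(3) ng[OF that(1,2)]] .
      have xx: "x \<odot> x = 0" using imag_sq[OF V1[OF xV]] n0[OF xV] by simp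
      show False
        using case_iso[OF params ch V1[OF xV] V1[OF yV] V1[OF zV] xx
            prod0[OF xV yV i_xy] prod0[OF yV xV indep2_sym[OF i_xy]]
            prod0[OF xV zV i_xz] prod0[OF zV xV indep2_sym[OF i_xz]]
            prod0[OF zV yV indep2_sym[OF i_yz]] ind] .
    qed
  qed
qed

lemma opow_imag:
  assumes x1: "x $ 1 = 0"
  shows "opow \<alpha> \<beta> \<gamma> x n = (if even n then (- nf x) ^ (n div 2) *s oone else (- nf x) ^ (n div 2) *s x)"
proof (induction n)
  case 0
  then show ?case by simp
next
  case (Suc n)
  show ?case
  proof (cases "even n")
    case True
    then show ?thesis using Suc by (simp add: mult_smult_left one_mult)
  next
    case False
    then have "opow \<alpha> \<beta> \<gamma> x (Suc n) = (- nf x) ^ (n div 2) *s (x \<odot> x)"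
      using Suc by (simp add: mult_smult_left)
    also have "\<dots> = (- nf x) ^ (Suc n div 2) *s oone"
      using False by (simp add: imag_sq[OF x1] vector_smult_assoc odd_Suc_div_two mult.commute)
    finally show ?thesis using False by simp
  qed
qed

lemma nilp_iff:
  assumes x1: "x $ 1 = 0"
  shows "onilpotent \<alpha> \<beta> \<gamma> x \<longleftrightarrow> nf x = 0"
proof
  assume "onilpotent \<alpha> \<beta> \<gamma> x"
  then obtain n where n: "opow \<alpha> \<beta> \<gamma> x n = 0" by (auto simp: onilpotent_def)
  show "nf x = 0"
  proof (rule ccontr)
    assume nx: "nf x \<noteq> 0"
    then have xnz: "x \<noteq> 0" by (auto simp: obil_zero_left)
    have "(- nf x) ^ (n div 2) \<noteq> 0" using nx by simp
    then show False using n opow_imag[OF x1, of n] xnz oone_ne0[where 'a='a] by (auto split: if_splits)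
  qed
next
  assume "nf x = 0"
  then have "opow \<alpha> \<beta> \<gamma> x 2 = 0" using opow_imag[OF x1, of 2] by simp
  then show "onilpotent \<alpha> \<beta> \<gamma> x" by (auto simp: onilpotent_def)
qed

lemma nil_line_char:
  assumes T1: "\<And>v. v \<in> T \<Longrightarrow> v $ 1 = 0" and subT: "vec.subspace T"
  shows "L \<in> nil_lines \<alpha> \<beta> \<gamma> T \<longleftrightarrow> (\<exists>u. u \<noteq> 0 \<and> u \<in> T \<and> nf u = 0 \<and> L = vec.span {u})"
proof
  assume "L \<in> nil_lines \<alpha> \<beta> \<gamma> T"
  then have subL: "vec.subspace L" and dL: "vec.dim L = 1" and LT: "L \<subseteq> T"
    and nilL: "\<forall>x\<in>L. onilpotent \<alpha> \<beta> \<gamma> x" by (auto simp: nil_lines_def)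
  obtain B where BL: "B \<subseteq> L" and iB: "vec.independent B" and LB: "L \<subseteq> vec.span B" and cB: "card B = vec.dim L"
    by (rule vec.basis_exists)
  then obtain u where Bu: "B = {u}" using dL by (auto simp: card_1_singleton_iff)
  have unz: "u \<noteq> 0" using iB Bu by auto
  have Leq: "L = vec.span {u}" using vec.span_subspace[OF BL LB subL] Bu by simp
  have uL: "u \<in> L" using BL Bu by auto
  have "nf u = 0" using nilL uL LT T1 nilp_iff by blast
  then show "\<exists>u. u \<noteq> 0 \<and> u \<in> T \<and> nf u = 0 \<and> L = vec.span {u}" using unz uL LT Leq by blast
next
  assume "\<exists>u. u \<noteq> 0 \<and> u \<in> T \<and> nf u = 0 \<and> L = vec.span {u}"
  then obtain u where unz: "u \<noteq> 0" and uT: "u \<in> T" and nu: "nf u = 0" and Leq: "L = vec.span {u}" by blast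
  have "vec.dim L = 1" using unz by (simp add: Leq vec.dim_span)
  moreover have "L \<subseteq> T" unfolding Leq by (rule vec.span_minimal) (use uT subT in auto)
  moreover have "\<forall>v\<in>L. onilpotent \<alpha> \<beta> \<gamma> v"
  proof
    fix v assume "v \<in> L"
    then obtain k where v: "v = k *s u" by (auto simp: Leq vec.span_singleton)
    have "v $ 1 = 0" using T1[OF uT] v by simp
    moreover have "nf v = 0" using nu v by (simp add: obil_smult_left obil_smult_right)
    ultimately show "onilpotent \<alpha> \<beta> \<gamma> v" using nilp_iff by blast
  qed
  ultimately show "L \<in> nil_lines \<alpha> \<beta> \<gamma> T" by (auto simp: nil_lines_def Leq)
qed


lemma nf_comb: "nf (a *s u + b *s v) = a * a * nf u + 2 * a * b * bf u v + b * b * nf v"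
  by (simp add: nf_add obil_smult_left obil_smult_right algebra_simps)

lemma span_smult_eq: "(k::'a) \<noteq> 0 \<Longrightarrow> vec.span {k *s u} = vec.span {u}"
proof -
  assume k: "k \<noteq> 0"
  have "range (\<lambda>c. c *s (k *s u)) = range (\<lambda>c. c *s u)"
  proof
    show "range (\<lambda>c. c *s (k *s u)) \<subseteq> range (\<lambda>c. c *s u)"
    proof
      fix v assume "v \<in> range (\<lambda>c. c *s (k *s u))"
      then obtain c where "v = c *s (k *s u)" by auto
      then have "v = (c * k) *s u" by (simp add: vector_smult_assoc)
      then show "v \<in> range (\<lambda>c. c *s u)" by (metis rangeI)
    qed
  next
    show "range (\<lambda>c. c *s u) \<subseteq> range (\<lambda>c. c *s (k *s u))"
    proof
      fix v assume "v \<in> range (\<lambda>c. c *s u)"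
      then obtain c where "v = c *s u" by auto
      then have "v = (c / k) *s (k *s u)" using k by (simp add: vector_smult_assoc)
      then show "v \<in> range (\<lambda>c. c *s (k *s u))" by (metis rangeI)
    qed
  qed
  then show ?thesis by (simp add: vec.span_singleton)
qed

lemma types:
  assumes ch: "(2::'a) \<noteq> 0"
    and x1: "x $ 1 = 0" and y1: "y $ 1 = 0" and g: "good x y"
  shows "typeQ \<alpha> \<beta> \<gamma> (vec.span {x, y}) \<or> typeM \<alpha> \<beta> \<gamma> (vec.span {x, y}) \<or>
         typeD \<alpha> \<beta> \<gamma> (vec.span {x, y}) \<or> typeJ \<alpha> \<beta> \<gamma> (vec.span {x, y})"
proof -
  define T where "T = vec.span {x, y}"
  have T1: "v $ 1 = 0" if "v \<in> T" for v
    using that x1 y1 unfolding T_def span2 by auto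
  have subT: "vec.subspace T" by (simp add: T_def)
  have xT: "x \<in> T" and yT: "y \<in> T" by (auto simp: T_def vec.span_base)
  have ixy: "\<forall>a b. a *s x + b *s y = 0 \<longrightarrow> a = 0 \<and> b = 0"
  proof (intro allI impI)
    fix a b assume "a *s x + b *s y = 0"
    then have "0 *s oone + a *s x + b *s y + 0 *s (x \<odot> y) = 0" by simp
    then show "a = 0 \<and> b = 0" using g unfolding good_def by blast
  qed
  have dT: "vec.dim T = 2"
    using indep2_set[OF ixy] by (simp add: T_def vec.dim_eq_card_independent)
  have xy0: "x \<odot> y \<noteq> 0"
  proof
    assume "x \<odot> y = 0"
    then have "0 *s oone + 0 *s x + 0 *s y + 1 *s (x \<odot> y) = 0" by simp
    then show False using g[unfolded good_def, rule_format, of 0 0 0 1] by simp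
  qed
  have notZ: "\<not> typeZ \<alpha> \<beta> \<gamma> T" using xy0 xT yT by (auto simp: typeZ_def)
  have notU: "\<not> typeU \<alpha> \<beta> \<gamma> T"
  proof
    assume "typeU \<alpha> \<beta> \<gamma> T"
    then obtain u where S: "nil_lines \<alpha> \<beta> \<gamma> T = {vec.span {u}}"
      and pr: "\<forall>v\<in>T. u \<odot> v \<in> vec.span {u}" by (auto simp: typeU_def)
    have "vec.span {u} \<in> nil_lines \<alpha> \<beta> \<gamma> T" using S by simp
    then obtain u' where u'nz: "u' \<noteq> 0" and u'T: "u' \<in> T" and su: "vec.span {u} = vec.span {u'}"
      using nil_line_char[OF T1 subT] by blast
    have uT: "u \<in> T"
    proof -
      have "u \<in> vec.span {u'}" unfolding su[symmetric] by (rule vec.span_base) simp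
      moreover have "vec.span {u'} \<subseteq> T" by (rule vec.span_minimal) (use u'T subT in auto)
      ultimately show ?thesis by auto
    qed
    have unz: "u \<noteq> 0"
    proof
      assume "u = 0"
      have "u' \<in> vec.span {u}" unfolding su by (rule vec.span_base) simp
      then show False using \<open>u = 0\<close> u'nz by (simp add: vec.span_singleton)
    qed
    obtain a b where u: "u = a *s x + b *s y" using uT unfolding T_def span2 by blast
    show False
    proof (cases "a = 0")
      case False
      obtain k where k: "u \<odot> y = k *s u" using pr yT by (auto simp: vec.span_singleton)
      have "(- b * nf y) *s oone + (- k * a) *s x + (- k * b) *s y + a *s (x \<odot> y) = u \<odot> y - k *s u"
        unfolding u by (simp add: mlin imag_sq[OF y1] vec_lin_eq algebra_simps)
      also have "\<dots> = 0" using k by simp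
      finally show False using g[unfolded good_def, rule_format, of "- b * nf y" "- k * a" "- k * b" a] False by simp
    next
      case True
      then have b: "b \<noteq> 0" using unz u by auto
      obtain k where k: "u \<odot> x = k *s u" using pr xT by (auto simp: vec.span_singleton)
      have "(- 2 * b * bf x y) *s oone + 0 *s x + (- k * b) *s y + (- b) *s (x \<odot> y) = u \<odot> x - k *s u"
        unfolding u using True by (simp add: mlin imag_anti[OF x1 y1] vec_lin_eq algebra_simps)
      also have "\<dots> = 0" using k by simp
      finally show False using g[unfolded good_def, rule_format, of "- 2 * b * bf x y" 0 "- k * b" "- b"] b by simp
    qed
  qed
  have three: "\<forall>v\<in>T. nf v = 0"
    if L: "L1 \<in> nil_lines \<alpha> \<beta> \<gamma> T" "L2 \<in> nil_lines \<alpha> \<beta> \<gamma> T" "L3 \<in> nil_lines \<alpha> \<beta> \<gamma> T"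
      and dL: "L1 \<noteq> L2" "L1 \<noteq> L3" "L2 \<noteq> L3" for L1 L2 L3
  proof -
    obtain u1 where u1: "u1 \<noteq> 0" "u1 \<in> T" "nf u1 = 0" "L1 = vec.span {u1}"
      using L(1) nil_line_char[OF T1 subT] by blast
    obtain u2 where u2: "u2 \<noteq> 0" "u2 \<in> T" "nf u2 = 0" "L2 = vec.span {u2}"
      using L(2) nil_line_char[OF T1 subT] by blast
    obtain u3 where u3: "u3 \<noteq> 0" "u3 \<in> T" "nf u3 = 0" "L3 = vec.span {u3}"
      using L(3) nil_line_char[OF T1 subT] by blast
    have i12: "\<forall>a b. a *s u1 + b *s u2 = 0 \<longrightarrow> a = 0 \<and> b = 0"
    proof (intro allI impI)
      fix a b assume h: "a *s u1 + b *s u2 = 0"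
      have b: "b = 0"
      proof (rule ccontr)
        assume b: "b \<noteq> 0"
        have u2e: "u2 = (- a / b) *s u1" using h b
          by (simp add: vec_lin_eq field_simps) (metis add.commute add_eq_0_iff2 vec_eq_iff vector_add_component vector_smult_component zero_index)
        have nz: "- a / b \<noteq> 0" using u2e u2(1) by auto
        have "L2 = vec.span {(- a / b) *s u1}" using u2(4) u2e by (simp only:)
        also have "\<dots> = vec.span {u1}" by (rule span_smult_eq[OF nz])
        also have "\<dots> = L1" using u1(4) by simp
        finally have "L2 = L1" .
        then show False using dL by simp
      qed
      then have "a = 0" using h u1(1) by simp
      with b show "a = 0 \<and> b = 0" by simp
    qed
    have "T \<subseteq> vec.span {u1, u2}"
      using indep2_set[OF i12] u1(2) u2(2) dT by (intro vec.card_ge_dim_independent) auto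
    then obtain a b where u3e: "u3 = a *s u1 + b *s u2" using u3(2) span2 by blast
    have a: "a \<noteq> 0"
    proof
      assume "a = 0"
      then have "u3 = b *s u2" using u3e by simp
      moreover have "b \<noteq> 0" using \<open>a = 0\<close> u3e u3(1) by auto
      ultimately have "L3 = L2" using u2(4) u3(4) span_smult_eq by simp
      then show False using dL by simp
    qed
    have b: "b \<noteq> 0"
    proof
      assume "b = 0"
      then have "u3 = a *s u1" using u3e by simp
      then have "L3 = L1" using u1(4) u3(4) span_smult_eq a by simp
      then show False using dL by simp
    qed
    have "2 * a * b * bf u1 u2 = 0" using u3(3) u1(3) u2(3) nf_comb[of a u1 b u2] u3e by simp
    then have b12: "bf u1 u2 = 0" using a b ch by simp
    show ?thesis
    proof
      fix v assume "v \<in> T"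
      then have "v \<in> vec.span {u1, u2}" using \<open>T \<subseteq> _\<close> by auto
      then obtain c e where "v = c *s u1 + e *s u2" using span2 by blast
      then show "nf v = 0" using nf_comb[of c u1 e u2] u1(3) u2(3) b12 by simp
    qed
  qed
  show ?thesis
  proof (cases "\<forall>v\<in>T. onilpotent \<alpha> \<beta> \<gamma> v")
    case True
    then have "typeJ \<alpha> \<beta> \<gamma> T" using notZ by (simp add: typeJ_def)
    then show ?thesis by (simp add: T_def)
  next
    case False
    then obtain v0 where v0: "v0 \<in> T" "\<not> onilpotent \<alpha> \<beta> \<gamma> v0" by blast
    have notall: "\<not> (\<forall>v\<in>T. nf v = 0)" using v0 nilp_iff T1 by blast
    define S where "S = nil_lines \<alpha> \<beta> \<gamma> T"
    have no3: "\<not> (L1 \<in> S \<and> L2 \<in> S \<and> L3 \<in> S \<and> L1 \<noteq> L2 \<and> L1 \<noteq> L3 \<and> L2 \<noteq> L3)" for L1 L2 L3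
      using three notall unfolding S_def by blast
    have "typeQ \<alpha> \<beta> \<gamma> T \<or> typeM \<alpha> \<beta> \<gamma> T \<or> typeD \<alpha> \<beta> \<gamma> T"
    proof (cases "S = {}")
      case True then show ?thesis by (simp add: typeQ_def S_def)
    next
      case False
      then obtain L1 where L1: "L1 \<in> S" by blast
      show ?thesis
      proof (cases "S = {L1}")
        case True
        then have "typeD \<alpha> \<beta> \<gamma> T" using notU by (auto simp: typeD_def S_def)
        then show ?thesis by simp
      next
        case False
        then obtain L2 where L2: "L2 \<in> S" "L2 \<noteq> L1" using L1 by blast
        have "S = {L1, L2}" using no3 L1 L2 by blast
        then have "typeM \<alpha> \<beta> \<gamma> T" using L2 by (auto simp: typeM_def S_def)
        then show ?thesis by simp
      qed
    qed
    then show ?thesis by (auto simp: T_def)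
  qed
qed

end

theorem mainTheorem14:
  fixes \<alpha> \<beta> \<gamma> :: "'a::field" and H :: "('a ^ 8) set"
  assumes char: "(2::'a) \<noteq> 0"
    and params: "\<alpha> \<noteq> 0" "\<beta> \<noteq> 0" "\<gamma> \<noteq> 0"
    and sub: "is_subalgebra \<alpha> \<beta> \<gamma> H"
    and dimH: "vec.dim H = 4"
  shows "\<exists>T. vec.subspace T \<and> vec.dim T = 2 \<and> T \<subseteq> oim H \<and>
     (typeQ \<alpha> \<beta> \<gamma> T \<or> typeM \<alpha> \<beta> \<gamma> T \<or> typeD \<alpha> \<beta> \<gamma> T \<or> typeJ \<alpha> \<beta> \<gamma> T) \<and>
     H = gen_subalgebra \<alpha> \<beta> \<gamma> T"
proof -
  interpret oct \<alpha> \<beta> \<gamma> .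
  obtain x y where xV: "x \<in> oim H" and yV: "y \<in> oim H" and g: "good x y"
    using exists_good[OF params char sub dimH] by blast
  have subH: "vec.subspace H" and oneH: "oone \<in> H"
    and clos: "\<And>u v. u \<in> H \<Longrightarrow> v \<in> H \<Longrightarrow> u \<odot> v \<in> H" using sub by (auto simp: is_subalgebra_def)
  have xH: "x \<in> H" and x1: "x $ 1 = 0" and yH: "y \<in> H" and y1: "y $ 1 = 0"
    using xV yV oim_iff[OF char] by auto
  define T where "T = vec.span {x, y}"
  have ixy: "\<forall>a b. a *s x + b *s y = 0 \<longrightarrow> a = 0 \<and> b = 0"
  proof (intro allI impI)
    fix a b assume "a *s x + b *s y = 0"
    then have "0 *s oone + a *s x + b *s y + 0 *s (x \<odot> y) = 0" by simp
    then show "a = 0 \<and> b = 0" using g unfolding good_def by blast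
  qed
  have dT: "vec.dim T = 2"
    using indep2_set[OF ixy] by (simp add: T_def vec.dim_eq_card_independent)
  have TH: "T \<subseteq> H" unfolding T_def by (rule vec.span_minimal) (use xH yH subH in auto)
  have Toim: "T \<subseteq> oim H"
  proof
    fix v assume "v \<in> T"
    then obtain a b where "v = a *s x + b *s y" unfolding T_def span2 by blast
    then have "v $ 1 = 0" using x1 y1 by simp
    then show "v \<in> oim H" using \<open>v \<in> T\<close> TH oim_iff[OF char] by auto
  qed
  have ty: "typeQ \<alpha> \<beta> \<gamma> T \<or> typeM \<alpha> \<beta> \<gamma> T \<or> typeD \<alpha> \<beta> \<gamma> T \<or> typeJ \<alpha> \<beta> \<gamma> T"
    unfolding T_def by (rule types[OF char x1 y1 g])
  have xyH: "x \<odot> y \<in> H" using clos xH yH by blast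
  have i4: "vec.independent {oone, x, y, x \<odot> y} \<and> card {oone, x, y, x \<odot> y} = 4"
    by (rule indep4_set) (use g in \<open>simp add: good_def\<close>)
  have Hspan: "H \<subseteq> vec.span {oone, x, y, x \<odot> y}"
    using i4 oneH xH yH xyH dimH by (intro vec.card_ge_dim_independent) auto
  have "H = gen_subalgebra \<alpha> \<beta> \<gamma> T"
  proof
    show "gen_subalgebra \<alpha> \<beta> \<gamma> T \<subseteq> H"
      unfolding gen_subalgebra_def using sub TH by blast
  next
    show "H \<subseteq> gen_subalgebra \<alpha> \<beta> \<gamma> T"
      unfolding gen_subalgebra_def
    proof (rule Inter_greatest)
      fix S assume "S \<in> {H. is_subalgebra \<alpha> \<beta> \<gamma> H \<and> T \<subseteq> H}"
      then have sS: "is_subalgebra \<alpha> \<beta> \<gamma> S" and TS: "T \<subseteq> S" by auto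
      have xS: "x \<in> S" and yS: "y \<in> S" using TS by (auto simp: T_def vec.span_base)
      have "{oone, x, y, x \<odot> y} \<subseteq> S" using sS xS yS by (auto simp: is_subalgebra_def)
      then have "vec.span {oone, x, y, x \<odot> y} \<subseteq> S"
        using sS by (intro vec.span_minimal) (auto simp: is_subalgebra_def)
      then show "H \<subseteq> S" using Hspan by auto
    qed
  qed
  then show ?thesis using dT Toim ty by (intro exI[of _ T]) (auto simp: T_def)
qed


end
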